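(* Assume $\sigma_1$ consists of simple eigenvalues and let $N\ge N_1$ be such that $\lambda_m^k\ne0$ for $|k|\ge N$. For $1\le m\le\ell_1$, $|k|\ge N$ let $\varphi_m^k=((I-e^{-\lambda_m^k}A_{-1})x_m^k,e^{\lambda_m^k\theta}x_m^k)$ and $\psi_m^k=\big(y_m^k,[\overline{\lambda_m^k}e^{-\overline{\lambda_m^k}\theta}-A_2^*(\theta)+e^{-\overline{\lambda_m^k}\theta}\int_0^\theta e^{\overline{\lambda_m^k}s}(A_3^*(s)+\overline{\lambda_m^k}A_2^*(s))ds]y_m^k\big)$, with $x_m^k\in\ker\Delta(\lambda_m^k)$, $y_m^k\in\ker\Delta^*(\overline{\lambda_m^k})$, $\|x_m^k\|=\|y_m^k\|=1$. Then there is a constant $C>0$ such that $\|\varphi_m^k\|_{M_2}\le C$ and $\frac{1}{|\lambda_m^k|}\|\psi_m^k\|_{M_2}\le C$ for all $1\le m\le\ell_1$, $|k|\ge N$.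
   Context: Setting: $n\ge1$, $A_{-1}\in\mathbb C^{n\times n}$, $A_2,A_3\in L_2([-1,0];\mathbb C^{n\times n})$; $M_2=\mathbb C^n\times L_2(-1,0;\mathbb C^n)$ with the product inner product. $\Delta(\lambda)=-\lambda I+\lambda e^{-\lambda}A_{-1}+\lambda\int_{-1}^0e^{\lambda s}A_2(s)ds+\int_{-1}^0e^{\lambda s}A_3(s)ds$, $\Delta^*(\lambda)$ the same with conjugate transposes. Spectral notation: $\mu_1,\dots,\mu_\ell$ distinct eigenvalues of $A_{-1}$ (possibly $\det A_{-1}=0$), $\sigma_1=\sigma(A_{-1})\cap\{|\mu|=1\}=\{\mu_1,\dots,\mu_{\ell_1}\}$; "$\sigma_1$ consists of simple eigenvalues" means each $\mu_m$, $m\le\ell_1$, has algebraic multiplicity $1$. $\tilde\lambda_m^k=\mathrm i(\arg\mu_m+2\pi k)$. Known: there are $N_1$ and radii $r^{(k)}$ with $\sum_k(r^{(k)})^2<\infty$ such that for $m\le\ell_1$, $|k|\ge N_1$ the disc of radius $r^{(k)}$ about $\tilde\lambda_m^k$ contains exactly one root (with multiplicity) $\lambda_m^k$ of $\det\Delta$, a simple eigenvalue of the associated operator, with $|\lambda_m^k-\tilde\lambda_m^k|\to0$. *)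

theory Defs
  imports "HOL-Analysis.Analysis" "HOL-Computational_Algebra.Polynomial"
begin

text \<open>Complex n x n matrices are rendered as complex^'n^'n (n = CARD('n) \<ge> 1).\<close>

definition smat :: "complex \<Rightarrow> complex^'n^'m \<Rightarrow> complex^'n^'m" where
  "smat c A = (\<chi> i j. c * A $ i $ j)"

definition adjm :: "complex^'n^'m \<Rightarrow> complex^'m^'n" where
  "adjm A = (\<chi> i j. cnj (A $ j $ i))"

definition charpoly :: "complex^'n^'n \<Rightarrow> complex poly" where
  "charpoly A = det (\<chi> i j. (if i = j then [:0, 1:] else 0) - [:A $ i $ j:])"

definition eigenvalues :: "complex^'n^'n \<Rightarrow> complex set" where
  "eigenvalues A = {\<mu>. \<exists>v. v \<noteq> 0 \<and> A *v v = \<mu> *s v}"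

definition alg_mult :: "complex^'n^'n \<Rightarrow> complex \<Rightarrow> nat" where
  "alg_mult A \<mu> = order \<mu> (charpoly A)"

definition sigma1 :: "complex^'n^'n \<Rightarrow> complex set" where
  "sigma1 A = {\<mu> \<in> eigenvalues A. cmod \<mu> = 1}"

definition L2_on :: "(real \<Rightarrow> 'a::euclidean_space) \<Rightarrow> bool" where
  "L2_on f \<longleftrightarrow> set_borel_measurable lborel {-1..0} f \<and>
                 set_integrable lborel {-1..0} (\<lambda>\<theta>. norm (f \<theta>) ^ 2)"

text \<open>Norm in M_2 = C^n x L_2(-1,0;C^n).\<close>
definition M2_norm :: "complex^'n \<Rightarrow> (real \<Rightarrow> complex^'n) \<Rightarrow> real" where
  "M2_norm v f = sqrt (norm v ^ 2 + (LINT \<theta>:{-1..0}|lborel. norm (f \<theta>) ^ 2))"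

definition Delta :: "complex^'n^'n \<Rightarrow> (real \<Rightarrow> complex^'n^'n) \<Rightarrow> (real \<Rightarrow> complex^'n^'n)
                      \<Rightarrow> complex \<Rightarrow> complex^'n^'n" where
  "Delta A1 A2 A3 l =
     smat (- l) (mat 1) + smat (l * exp (- l)) A1
     + smat l (LINT s:{-1..0}|lborel. smat (exp (l * of_real s)) (A2 s))
     + (LINT s:{-1..0}|lborel. smat (exp (l * of_real s)) (A3 s))"

definition Delta_star :: "complex^'n^'n \<Rightarrow> (real \<Rightarrow> complex^'n^'n) \<Rightarrow> (real \<Rightarrow> complex^'n^'n)
                      \<Rightarrow> complex \<Rightarrow> complex^'n^'n" where
  "Delta_star A1 A2 A3 l = Delta (adjm A1) (\<lambda>s. adjm (A2 s)) (\<lambda>s. adjm (A3 s)) l"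

definition lam_tilde :: "complex \<Rightarrow> int \<Rightarrow> complex" where
  "lam_tilde \<mu> k = \<i> * of_real (Arg \<mu> + 2 * pi * of_int k)"

definition phi0 :: "complex^'n^'n \<Rightarrow> complex \<Rightarrow> complex^'n \<Rightarrow> complex^'n" where
  "phi0 A1 l x = (mat 1 - smat (exp (- l)) A1) *v x"

definition phi1 :: "complex \<Rightarrow> complex^'n \<Rightarrow> real \<Rightarrow> complex^'n" where
  "phi1 l x \<theta> = exp (l * of_real \<theta>) *s x"

definition psi1 :: "(real \<Rightarrow> complex^'n^'n) \<Rightarrow> (real \<Rightarrow> complex^'n^'n)
                    \<Rightarrow> complex \<Rightarrow> complex^'n \<Rightarrow> real \<Rightarrow> complex^'n" where
  "psi1 A2 A3 l y \<theta> =
     (smat (cnj l * exp (- cnj l * of_real \<theta>)) (mat 1) - adjm (A2 \<theta>)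
      + smat (exp (- cnj l * of_real \<theta>))
          (interval_lebesgue_integral lborel (ereal 0) (ereal \<theta>)
             (\<lambda>s. smat (exp (cnj l * of_real s)) (adjm (A3 s) + smat (cnj l) (adjm (A2 s))))))
     *v y"

end

theory Submission
  imports Defs
begin

lemma norm_vec_sq: "norm (v::'a::real_normed_vector^'n)^2 = (\<Sum>i\<in>UNIV. norm (v$i)^2)"
  unfolding norm_vec_def L2_set_def by (simp add: sum_nonneg)

lemma norm_cvec_scale: "norm (c *s (v::complex^'n)) = cmod c * norm v"
proof -
  have "norm (c *s v)^2 = (cmod c * norm v)^2"
    by (simp add: norm_vec_sq power_mult_distrib norm_mult sum_distrib_left)
  then show ?thesis by (simp add: power2_eq_iff_nonneg)
qed

lemma smat_rows: "smat c M = (\<chi> i. c *s (M $ i))"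
  by (simp add: smat_def vec_eq_iff)

lemma norm_smat: "norm (smat c (M::complex^'n^'m)) = cmod c * norm M"
proof -
  have "norm (smat c M)^2 = (cmod c * norm M)^2"
    by (simp add: smat_rows norm_vec_sq[of "\<chi> i. c *s (M $ i)"] norm_vec_sq[of M] norm_cvec_scale
          power_mult_distrib sum_distrib_left)
  then show ?thesis by (simp add: power2_eq_iff_nonneg)
qed

lemma norm_adjm: "norm (adjm (M::complex^'n^'m)) = norm M"
proof -
  have "norm (adjm M)^2 = norm M^2"
    unfolding norm_vec_sq[of "adjm M"] norm_vec_sq[of M]
    by (simp add: adjm_def norm_vec_sq) (rule sum.swap)
  then show ?thesis by (simp add: power2_eq_iff_nonneg)
qed

lemma entry_le_norm: "cmod ((M::complex^'n^'m) $ i $ j) \<le> norm M"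
  using Finite_Cartesian_Product.norm_nth_le[of "M $ i" j] Finite_Cartesian_Product.norm_nth_le[of M i] by linarith

lemma norm_mv_bound:
  fixes B :: "complex^'n^'m"
  assumes "\<And>i j. cmod (B $ i $ j) \<le> b"
  shows "norm (B *v x) \<le> real CARD('m) * real CARD('n) * b * norm x"
proof -
  have "norm (B *v x) \<le> (\<Sum>i\<in>UNIV. norm ((B *v x) $ i))"
    unfolding norm_vec_def by (rule L2_set_le_sum) simp
  also have "\<dots> \<le> (\<Sum>i\<in>(UNIV::'m set). (\<Sum>j\<in>(UNIV::'n set). b * norm x))"
  proof (rule sum_mono)
    fix i
    have "norm ((B *v x) $ i) = cmod (\<Sum>j\<in>UNIV. B $ i $ j * x $ j)"
      by (simp add: matrix_vector_mult_def)
    also have "\<dots> \<le> (\<Sum>j\<in>UNIV. cmod (B $ i $ j * x $ j))" by (rule norm_sum)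
    also have "\<dots> \<le> (\<Sum>j\<in>(UNIV::'n set). b * norm x)"
      by (rule sum_mono) (simp add: norm_mult mult_mono' assms Finite_Cartesian_Product.norm_nth_le
          order_trans[OF norm_ge_zero assms])
    finally show "norm ((B *v x) $ i) \<le> (\<Sum>j\<in>(UNIV::'n set). b * norm x)" .
  qed
  finally show ?thesis by simp
qed

lemma poly_charpoly: "poly (charpoly A) z = det (\<chi> i j. (if i = j then z else 0) - A $ i $ j)"
  unfolding charpoly_def det_def by (auto simp add: poly_sum poly_prod intro!: sum.cong prod.cong)

lemma det_nz_if_ker:
  fixes M :: "complex^'n^'n"
  assumes "\<And>v. M *v v = 0 \<Longrightarrow> v = 0"
  shows "det M \<noteq> 0"
proof -
  obtain B where "B ** M = mat 1" using matrix_left_invertible_ker[of M] assms by blast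
  then have "det B * det M = 1" by (metis det_I det_mul)
  then show ?thesis by auto
qed

lemma charpoly_nz: "charpoly (A::complex^'n^'n) \<noteq> 0"
proof -
  define S where "S = (\<Sum>i\<in>UNIV. \<Sum>j\<in>UNIV. cmod (A $ i $ j))"
  define z where "z = complex_of_real (1 + S)"
  have S0: "S \<ge> 0" unfolding S_def by (intro sum_nonneg) auto
  let ?M = "(\<chi> i j. (if i = j then z else 0) - A $ i $ j) :: complex^'n^'n"
  have "det ?M \<noteq> 0"
  proof (rule det_nz_if_ker, rule ccontr)
    fix v :: "complex^'n" assume Mv: "?M *v v = 0" and "v \<noteq> 0"
    define m where "m = Max (range (\<lambda>j. cmod (v $ j)))"
    have "m \<in> range (\<lambda>j. cmod (v $ j))" unfolding m_def by (rule Max_in) auto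
    then obtain i where mi: "cmod (v $ i) = m" by auto
    have mle: "cmod (v $ j) \<le> m" for j unfolding m_def by (rule Max_ge) auto
    have "m > 0"
    proof (rule ccontr)
      assume "\<not> m > 0"
      then have "v $ j = 0" for j using mle[of j] by (smt (verit) norm_ge_zero zero_less_norm_iff)
      then show False using \<open>v \<noteq> 0\<close> by (simp add: vec_eq_iff)
    qed
    have "(?M *v v) $ i = 0" using Mv by simp
    then have "(\<Sum>j\<in>UNIV. ((if i = j then z else 0) - A $ i $ j) * v $ j) = 0"
      by (simp add: matrix_vector_mult_def)
    then have "(\<Sum>j\<in>UNIV. (if i = j then z else 0) * v $ j) = (\<Sum>j\<in>UNIV. A $ i $ j * v $ j)"
      by (simp add: left_diff_distrib sum_subtractf)
    moreover have "(\<Sum>j\<in>UNIV. (if i = j then z else 0) * v $ j) = z * v $ i"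
      by (subst sum.cong[OF refl, of _ _ "\<lambda>j. if i = j then z * v$j else 0"]) auto
    ultimately have eq: "z * v $ i = (\<Sum>j\<in>UNIV. A $ i $ j * v $ j)" by simp
    have "cmod (z * v $ i) = (1 + S) * m" using S0 mi unfolding z_def norm_mult by (simp del: of_real_add)
    also have "cmod (\<Sum>j\<in>UNIV. A $ i $ j * v $ j) \<le> (\<Sum>j\<in>UNIV. cmod (A $ i $ j) * m)"
      by (rule order_trans[OF norm_sum], rule sum_mono) (simp add: norm_mult mult_left_mono mle)
    moreover have "(\<Sum>j\<in>UNIV. cmod (A $ i $ j) * m) \<le> S * m"
    proof -
      have "(\<Sum>j\<in>UNIV. cmod (A $ i $ j)) \<le> S" unfolding S_def
        by (rule member_le_sum) (auto intro: sum_nonneg)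
      then show ?thesis using \<open>m > 0\<close> by (simp add: sum_distrib_right[symmetric] mult_right_mono)
    qed
    ultimately show False using eq \<open>m > 0\<close> by (smt (verit) mult_less_cancel_right)
  qed
  then have "poly (charpoly A) z \<noteq> 0" by (simp add: poly_charpoly)
  then show ?thesis by auto
qed

lemma finite_sigma1:
  assumes "\<forall>\<mu>\<in>sigma1 A1. alg_mult A1 \<mu> = 1"
  shows "finite (sigma1 (A1::complex^'n^'n))"
proof -
  have "sigma1 A1 \<subseteq> {x. poly (charpoly A1) x = 0}"
    using assms by (auto simp: alg_mult_def order_root)
  then show ?thesis using poly_roots_finite[OF charpoly_nz] finite_subset by blast
qed

lemma exp_bound:
  assumes "\<bar>Re l\<bar> \<le> R" "\<theta> \<in> {-1..0}"
  shows "cmod (exp (l * of_real \<theta>)) \<le> exp R"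
proof -
  have "\<bar>\<theta>\<bar> \<le> 1" using assms by auto
  then have "\<bar>Re l\<bar> * \<bar>\<theta>\<bar> \<le> \<bar>Re l\<bar> * 1" by (intro mult_left_mono) auto
  then have "\<bar>Re l * \<theta>\<bar> \<le> R" using assms by (simp add: abs_mult)
  then show ?thesis by simp
qed

lemma exp_bound2:
  assumes "\<bar>Re l\<bar> \<le> R"
  shows "cmod (exp (- l)) \<le> exp R"
  using assms by (simp add: abs_le_iff)

lemma set_integral_const_Icc: "(LINT t:{-1..0::real}|lborel. (c::real)) = c"
  by (simp add: set_integral_const)

lemma phi_bound:
  fixes A1 :: "complex^'n^'n" and x :: "complex^'n"
  assumes R: "\<bar>Re l\<bar> \<le> R" and x: "norm x = 1"
  shows "L2_on (phi1 l x) \<and>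
    M2_norm (phi0 A1 l x) (phi1 l x) \<le>
      sqrt ((real CARD('n) * real CARD('n) * (1 + exp R * norm A1))^2 + (exp R)^2)"
proof -
  let ?S = "{-1..0::real}"
  have cont: "continuous_on UNIV (phi1 l x)"
    unfolding phi1_def[abs_def] vector_scalar_mult_def by (intro continuous_intros)
  have meas: "set_borel_measurable lborel ?S (phi1 l x)"
    unfolding set_borel_measurable_def measurable_lborel2
    by (rule borel_measurable_continuous_on_indicator) (auto intro: continuous_on_subset[OF cont])
  have int: "set_integrable lborel ?S (\<lambda>\<theta>. norm (phi1 l x \<theta>) ^ 2)"
    by (rule borel_integrable_atLeastAtMost') (intro continuous_intros continuous_on_subset[OF cont], auto)
  have pb: "norm (phi1 l x \<theta>) ^ 2 \<le> (exp R)^2" if "\<theta> \<in> ?S" for \<theta>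
  proof -
    have "norm (phi1 l x \<theta>) \<le> exp R" using exp_bound[OF R that] x by (simp add: phi1_def norm_cvec_scale)
    then show ?thesis by (intro power_mono) auto
  qed
  have "(LINT \<theta>:?S|lborel. norm (phi1 l x \<theta>) ^ 2) \<le> (LINT \<theta>:?S|lborel. (exp R)^2)"
    by (rule set_integral_mono[OF int], simp add: borel_integrable_atLeastAtMost', erule pb)
  then have I: "(LINT \<theta>:?S|lborel. norm (phi1 l x \<theta>) ^ 2) \<le> (exp R)^2"
    by (simp add: set_integral_const_Icc)
  have ent: "cmod ((mat 1 - smat (exp (- l)) A1) $ i $ j) \<le> 1 + exp R * norm A1" for i j
  proof -
    have "cmod ((mat 1 - smat (exp (- l)) A1) $ i $ j) \<le> cmod ((mat 1 :: complex^'n^'n) $ i $ j) + cmod (exp (- l) * A1 $ i $ j)"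
      by (simp add: smat_def norm_triangle_ineq4)
    also have "\<dots> \<le> 1 + exp R * norm A1"
      unfolding norm_mult using exp_bound2[OF R] entry_le_norm[of A1 i j]
      by (intro add_mono) (auto simp: mat_def intro!: mult_mono)
    finally show ?thesis .
  qed
  have p0: "norm (phi0 A1 l x) \<le> real CARD('n) * real CARD('n) * (1 + exp R * norm A1)"
    using norm_mv_bound[of "mat 1 - smat (exp (- l)) A1", OF ent, of x] x by (simp add: phi0_def)
  have "M2_norm (phi0 A1 l x) (phi1 l x) \<le> sqrt ((real CARD('n) * real CARD('n) * (1 + exp R * norm A1))^2 + (exp R)^2)"
    unfolding M2_norm_def
    by (intro real_sqrt_le_mono add_mono power_mono p0 I) simp
  then show ?thesis using meas int unfolding L2_on_def by blast
qed

lemma cont_adjm: "continuous_on UNIV (adjm :: complex^'n^'m \<Rightarrow> complex^'m^'n)"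
  unfolding adjm_def[abs_def] by (intro continuous_intros)

lemma cont_smat: "continuous_on UNIV (\<lambda>p::complex \<times> (complex^'n^'m). smat (fst p) (snd p))"
  unfolding smat_def by (intro continuous_intros)

lemma cont_mv: "continuous_on UNIV (\<lambda>p::(complex^'n^'m) \<times> (complex^'n). fst p *v snd p)"
  unfolding matrix_vector_mult_def by (intro continuous_intros)

lemma bm_adjm[measurable (raw)]:
  "f \<in> borel_measurable M \<Longrightarrow> (\<lambda>x. adjm (f x :: complex^'n^'m)) \<in> borel_measurable M"
  using borel_measurable_continuous_on[OF cont_adjm] by blast

lemma bm_smat[measurable (raw)]:
  assumes "f \<in> borel_measurable M" "g \<in> borel_measurable M"
  shows "(\<lambda>x. smat (f x) (g x :: complex^'n^'m)) \<in> borel_measurable M"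
  using borel_measurable_continuous_on[OF cont_smat borel_measurable_Pair[OF assms]] by simp

lemma bm_mv[measurable (raw)]:
  assumes "f \<in> borel_measurable M" "g \<in> borel_measurable M"
  shows "(\<lambda>x. (f x :: complex^'n^'m) *v g x) \<in> borel_measurable M"
  using borel_measurable_continuous_on[OF cont_mv borel_measurable_Pair[OF assms]] by simp

lemma bm_cexp[measurable]: "(\<lambda>s::real. exp ((c::complex) * of_real s)) \<in> borel_measurable borel"
  by (rule borel_measurable_continuous_onI) (intro continuous_on_exp continuous_on_mult' continuous_on_const continuous_on_of_real continuous_on_id)

lemma L2_L1:
  fixes f :: "real \<Rightarrow> 'a::euclidean_space"
  assumes "L2_on f"
  shows "integrable lborel (\<lambda>s. norm (indicator {-1..0::real} s *\<^sub>R f s))"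
proof -
  let ?S = "{-1..0::real}"
  have m[measurable]: "(\<lambda>s. indicator ?S s *\<^sub>R f s) \<in> borel_measurable lborel"
    using assms unfolding L2_on_def set_borel_measurable_def by blast
  have i2: "integrable lborel (\<lambda>s. indicator ?S s *\<^sub>R (norm (f s))^2)"
    using assms unfolding L2_on_def set_integrable_def by blast
  have i1: "integrable lborel (\<lambda>s. indicator ?S s *\<^sub>R (1::real))"
    using borel_integrable_atLeastAtMost'[of "-1" 0 "\<lambda>_. 1::real"] unfolding set_integrable_def by simp
  have "integrable lborel (\<lambda>s. indicator ?S s *\<^sub>R (1::real) + indicator ?S s *\<^sub>R (norm (f s))^2)"
    using i1 i2 by (rule Bochner_Integration.integrable_add)
  then show ?thesis
  proof (rule Bochner_Integration.integrable_bound)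
    show "(\<lambda>s. norm (indicator ?S s *\<^sub>R f s)) \<in> borel_measurable lborel" by measurable
    have t: "t \<le> 1 + t^2" for t :: real
    proof (cases "t \<le> 1")
      case True then show ?thesis using zero_le_power2[of t] by linarith
    next
      case False
      then have "t * 1 \<le> t * t" by (intro mult_left_mono) auto
      then show ?thesis by (simp add: power2_eq_square)
    qed
    show "AE x in lborel. norm (norm (indicator ?S x *\<^sub>R f x))
        \<le> norm (indicator ?S x *\<^sub>R (1::real) + indicator ?S x *\<^sub>R (norm (f x))\<^sup>2)"
    proof (rule AE_I2)
      fix x show "norm (norm (indicator ?S x *\<^sub>R f x))
        \<le> norm (indicator ?S x *\<^sub>R (1::real) + indicator ?S x *\<^sub>R (norm (f x))\<^sup>2)"
      proof (cases "x \<in> ?S")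
        case True
        have "norm (f x) \<le> 1 + (norm (f x))^2" by (rule t)
        then show ?thesis using True by simp
      qed simp
    qed
  qed
qed

lemma adjm_0[simp]: "adjm 0 = 0" by (simp add: adjm_def vec_eq_iff)
lemma smat_0[simp]: "smat c 0 = 0" by (simp add: smat_def vec_eq_iff)

lemma psi_bound:
  fixes A2 A3 :: "real \<Rightarrow> complex^'n^'n" and y :: "complex^'n"
  assumes A2: "L2_on A2" and A3: "L2_on A3" and R: "\<bar>Re l\<bar> \<le> R" and y: "norm y = 1"
  shows "L2_on (psi1 A2 A3 l y) \<and> M2_norm y (psi1 A2 A3 l y) \<le>
    sqrt (1 + 2 * (real CARD('n) * real CARD('n))^2 *
      ((cmod l * exp R + exp R * (exp R * ((LINT s|lborel. norm (indicator {-1..0::real} s *\<^sub>R A3 s))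
          + cmod l * (LINT s|lborel. norm (indicator {-1..0::real} s *\<^sub>R A2 s)))))^2
       + (LINT s:{-1..0}|lborel. norm (A2 s)^2)))"
proof -
  let ?S = "{-1..0::real}"
  define I2 where "I2 = (LINT s|lborel. norm (indicator {-1..0::real} s *\<^sub>R A2 s))"
  define I3 where "I3 = (LINT s|lborel. norm (indicator {-1..0::real} s *\<^sub>R A3 s))"
  define I22 where "I22 = (LINT s:{-1..0}|lborel. norm (A2 s)^2)"
  define K where "K = real CARD('n) * real CARD('n)"
  define a where "a = cmod l * exp R + exp R * (exp R * (I3 + cmod l * I2))"
  define A2t where "A2t s = indicator ?S s *\<^sub>R A2 s" for s
  define A3t where "A3t s = indicator ?S s *\<^sub>R A3 s" for s
  have [measurable]: "A2t \<in> borel_measurable borel"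
    using A2 unfolding L2_on_def set_borel_measurable_def A2t_def[abs_def] by simp
  have [measurable]: "A3t \<in> borel_measurable borel"
    using A3 unfolding L2_on_def set_borel_measurable_def A3t_def[abs_def] by simp
  define Gt where "Gt s = smat (exp (cnj l * of_real s)) (adjm (A3t s) + smat (cnj l) (adjm (A2t s)))" for s
  have [measurable]: "Gt \<in> borel_measurable borel" unfolding Gt_def[abs_def] by measurable
  define Jt where "Jt \<theta> = (LINT s|lborel. (if \<theta> < s \<and> s < 0 then Gt s else 0))" for \<theta>
  have [measurable]: "Jt \<in> borel_measurable borel" unfolding Jt_def[abs_def] by measurable
  define h where "h s = exp R * (norm (A3t s) + cmod l * norm (A2t s))" for s
  have hint: "integrable lborel h"
    using L2_L1[OF A2] L2_L1[OF A3] unfolding h_def A2t_def A3t_def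
    by (intro Bochner_Integration.integrable_add integrable_mult_right)
  have hval: "integral\<^sup>L lborel h = exp R * (I3 + cmod l * I2)"
    using L2_L1[OF A2] L2_L1[OF A3] unfolding h_def A2t_def A3t_def I2_def I3_def
    by (simp add: Bochner_Integration.integral_add)
  have h0: "h s \<ge> 0" for s unfolding h_def by simp
  have eR: "exp (-R) \<ge> 0" by simp
  have Gb: "norm (Gt s) \<le> h s" for s
  proof (cases "s \<in> ?S")
    case True
    have e: "cmod (exp (cnj l * of_real s)) \<le> exp R" using exp_bound[of "cnj l" R s] R True by simp
    have "norm (adjm (A3 s) + smat (cnj l) (adjm (A2 s))) \<le> norm (A3 s) + cmod l * norm (A2 s)"
      using norm_triangle_ineq[of "adjm (A3 s)" "smat (cnj l) (adjm (A2 s))"] by (simp add: norm_smat norm_adjm)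
    then have "norm (Gt s) \<le> exp R * (norm (A3 s) + cmod l * norm (A2 s))"
      using True e unfolding Gt_def A2t_def A3t_def norm_smat
      by (simp add: mult_mono)
    then show ?thesis using True by (simp add: h_def A2t_def A3t_def)
  next
    case False then show ?thesis using h0[of s] by (simp add: Gt_def A2t_def A3t_def)
  qed
  have Jtb: "norm (Jt \<theta>) \<le> exp R * (I3 + cmod l * I2)" for \<theta>
  proof -
    have ii: "integrable lborel (\<lambda>s. if \<theta> < s \<and> s < 0 then Gt s else 0)"
      by (rule Bochner_Integration.integrable_bound[OF hint]) (auto simp: Gb h0 abs_of_nonneg)
    show ?thesis unfolding Jt_def hval[symmetric]
      by (rule Bochner_Integration.integral_norm_bound_integral[OF ii hint]) (auto simp: Gb h0)
  qed
  have Jeq: "interval_lebesgue_integral lborel (ereal 0) (ereal \<theta>)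
     (\<lambda>s. smat (exp (cnj l * of_real s)) (adjm (A3 s) + smat (cnj l) (adjm (A2 s)))) = - Jt \<theta>"
    if "\<theta> \<in> ?S" for \<theta>
  proof (cases "\<theta> = 0")
    case True
    have "(\<lambda>s::real. if 0 < s \<and> s < 0 then Gt s else 0) = (\<lambda>s. 0)" by (intro ext) (simp, linarith)
    then show ?thesis using True by (simp add: Jt_def interval_lebesgue_integral_def einterval_same set_lebesgue_integral_def)
  next
    case False
    then have "\<theta> < 0" using that by auto
    then show ?thesis using that
      unfolding interval_lebesgue_integral_def set_lebesgue_integral_def Jt_def
      by (auto intro!: Bochner_Integration.integral_cong arg_cong[where f=uminus]
               simp: einterval_iff indicator_def Gt_def A2t_def A3t_def)
  qed
  define e where "e \<theta> = exp (- cnj l * of_real \<theta>)" for \<theta>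
  define Psi where "Psi \<theta> = (smat (cnj l * e \<theta>) (mat 1) - adjm (A2t \<theta>) + smat (e \<theta>) (- Jt \<theta>)) *v y" for \<theta>
  have [measurable]: "Psi \<in> borel_measurable borel" unfolding Psi_def[abs_def] e_def by measurable
  have psi_eq: "psi1 A2 A3 l y \<theta> = Psi \<theta>" if "\<theta> \<in> ?S" for \<theta>
    using that Jeq[OF that] by (simp add: psi1_def Psi_def e_def A2t_def)
  have ind_eq: "indicator ?S \<theta> *\<^sub>R psi1 A2 A3 l y \<theta> = indicator ?S \<theta> *\<^sub>R Psi \<theta>" for \<theta>
    using psi_eq[of \<theta>] by (cases "\<theta> \<in> ?S") auto
  have meas: "set_borel_measurable lborel ?S (psi1 A2 A3 l y)"
    unfolding set_borel_measurable_def ind_eq by measurable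
  have pb: "norm (Psi \<theta>) \<le> K * (a + norm (A2 \<theta>))" if "\<theta> \<in> ?S" for \<theta>
  proof -
    have ee: "cmod (e \<theta>) \<le> exp R" using exp_bound[of "- cnj l" R \<theta>] R that by (simp add: e_def)
    have ent: "cmod ((smat (cnj l * e \<theta>) (mat 1) - adjm (A2t \<theta>) + smat (e \<theta>) (- Jt \<theta>)) $ i $ j)
       \<le> a + norm (A2 \<theta>)" for i j
    proof -
      have t1: "cmod (cnj l * e \<theta> * (mat 1 :: complex^'n^'n) $ i $ j) \<le> cmod l * exp R"
        using ee by (auto simp: mat_def norm_mult intro!: mult_left_mono)
      have t2: "cmod (adjm (A2t \<theta>) $ i $ j) \<le> norm (A2 \<theta>)"
        using that entry_le_norm[of "A2 \<theta>" j i] by (simp add: adjm_def A2t_def)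
      have t3: "cmod (e \<theta> * (- Jt \<theta>) $ i $ j) \<le> exp R * (exp R * (I3 + cmod l * I2))"
        unfolding norm_mult using ee entry_le_norm[of "Jt \<theta>" i j] Jtb[of \<theta>]
        by (intro mult_mono) auto
      have "cmod ((smat (cnj l * e \<theta>) (mat 1) - adjm (A2t \<theta>) + smat (e \<theta>) (- Jt \<theta>)) $ i $ j)
          \<le> cmod (cnj l * e \<theta> * (mat 1 :: complex^'n^'n) $ i $ j) + cmod (adjm (A2t \<theta>) $ i $ j)
             + cmod (e \<theta> * (- Jt \<theta>) $ i $ j)"
      proof -
        have eqij: "(smat (cnj l * e \<theta>) (mat 1) - adjm (A2t \<theta>) + smat (e \<theta>) (- Jt \<theta>)) $ i $ j
           = cnj l * e \<theta> * (mat 1 :: complex^'n^'n) $ i $ j - adjm (A2t \<theta>) $ i $ j + e \<theta> * (- Jt \<theta>) $ i $ j"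
          by (simp add: smat_def)
        show ?thesis unfolding eqij
          using norm_triangle_ineq[of "cnj l * e \<theta> * (mat 1 :: complex^'n^'n) $ i $ j - adjm (A2t \<theta>) $ i $ j"
              "e \<theta> * (- Jt \<theta>) $ i $ j"]
            norm_triangle_ineq4[of "cnj l * e \<theta> * (mat 1 :: complex^'n^'n) $ i $ j" "adjm (A2t \<theta>) $ i $ j"]
          by linarith
      qed
      then show ?thesis using t1 t2 t3 unfolding a_def by linarith
    qed
    have "norm (Psi \<theta>) \<le> real CARD('n) * real CARD('n) * (a + norm (A2 \<theta>)) * norm y"
      unfolding Psi_def by (rule norm_mv_bound[OF ent])
    then show ?thesis using y by (simp add: K_def)
  qed
  have sq: "norm (psi1 A2 A3 l y \<theta>)^2 \<le> 2*K^2*a^2 + 2*K^2*norm (A2 \<theta>)^2" if "\<theta> \<in> ?S" for \<theta>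
  proof -
    have "norm (psi1 A2 A3 l y \<theta>)^2 \<le> (K * (a + norm (A2 \<theta>)))^2"
      using pb[OF that] psi_eq[OF that] by (intro power_mono) auto
    also have "\<dots> = K^2 * (a + norm (A2 \<theta>))^2" by (simp add: power_mult_distrib)
    also have "\<dots> \<le> K^2 * (2 * (a^2 + norm (A2 \<theta>)^2))"
    proof (rule mult_left_mono)
      show "(a + norm (A2 \<theta>))^2 \<le> 2 * (a^2 + norm (A2 \<theta>)^2)"
        using zero_le_power2[of "a - norm (A2 \<theta>)"] by (simp add: power2_eq_square algebra_simps)
    qed simp
    finally show ?thesis by (simp add: algebra_simps)
  qed
  have A2sq: "set_integrable lborel ?S (\<lambda>\<theta>. norm (A2 \<theta>)^2)" using A2 unfolding L2_on_def by blast
  have cint: "set_integrable lborel ?S (\<lambda>\<theta>. 2*K^2*a^2)"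
    by (rule borel_integrable_atLeastAtMost') simp
  have bint: "set_integrable lborel ?S (\<lambda>\<theta>. 2*K^2*a^2 + 2*K^2*norm (A2 \<theta>)^2)"
    using cint A2sq by (intro set_integral_add(1)) auto
  have pint: "set_integrable lborel ?S (\<lambda>\<theta>. norm (psi1 A2 A3 l y \<theta>)^2)"
    unfolding set_integrable_def
  proof (rule Bochner_Integration.integrable_bound[OF bint[unfolded set_integrable_def]])
    have "(\<lambda>\<theta>. indicator ?S \<theta> *\<^sub>R norm (psi1 A2 A3 l y \<theta>)^2) = (\<lambda>\<theta>. indicator ?S \<theta> *\<^sub>R norm (Psi \<theta>)^2)"
      using psi_eq by (auto simp: indicator_def)
    moreover have "(\<lambda>\<theta>. indicator ?S \<theta> *\<^sub>R norm (Psi \<theta>)^2) \<in> borel_measurable lborel" by measurable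
    ultimately show "(\<lambda>\<theta>. indicator ?S \<theta> *\<^sub>R norm (psi1 A2 A3 l y \<theta>)^2) \<in> borel_measurable lborel" by simp
    show "AE x in lborel. norm (indicator ?S x *\<^sub>R norm (psi1 A2 A3 l y x)^2)
       \<le> norm (indicator ?S x *\<^sub>R (2*K^2*a^2 + 2*K^2*norm (A2 x)^2))"
    proof (rule AE_I2)
      fix x show "norm (indicator ?S x *\<^sub>R norm (psi1 A2 A3 l y x)^2)
       \<le> norm (indicator ?S x *\<^sub>R (2*K^2*a^2 + 2*K^2*norm (A2 x)^2))"
        using sq[of x] by (cases "x \<in> ?S") auto
    qed
  qed
  have "(LINT \<theta>:?S|lborel. norm (psi1 A2 A3 l y \<theta>)^2) \<le> (LINT \<theta>:?S|lborel. 2*K^2*a^2 + 2*K^2*norm (A2 \<theta>)^2)"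
    by (rule set_integral_mono[OF pint bint sq])
  also have "\<dots> = 2*K^2*a^2 + 2*K^2*I22"
    using cint A2sq unfolding I22_def by (simp add: set_integral_const_Icc)
  finally have Ib: "(LINT \<theta>:?S|lborel. norm (psi1 A2 A3 l y \<theta>)^2) \<le> 2*K^2*a^2 + 2*K^2*I22" .
  have "M2_norm y (psi1 A2 A3 l y) \<le> sqrt (1 + 2 * K^2 * (a^2 + I22))"
    unfolding M2_norm_def using Ib y by (simp add: algebra_simps)
  then show ?thesis using meas pint unfolding L2_on_def K_def a_def I2_def I3_def I22_def by blast
qed

lemma div_bound:
  fixes L d e I2 I3 I22 K :: real
  assumes d: "d > 0" "d \<le> L" and nn: "e \<ge> 0" "I2 \<ge> 0" "I3 \<ge> 0" "I22 \<ge> 0"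
  shows "sqrt (1 + 2*K^2*((L*e + e*(e*(I3 + L*I2)))^2 + I22)) / L
     \<le> sqrt (1/d^2 + 2*K^2*((e + e*(e*(I3/d + I2)))^2 + I22/d^2))"
proof -
  define q where "q = L / d"
  have q1: "q \<ge> 1" using d by (simp add: q_def)
  have L: "L = q * d" using d by (simp add: q_def)
  have Lp: "L > 0" using d by simp
  have qq: "q^2 \<ge> 1" using q1 by (simp add: one_le_power)
  have "e*(e*(I3 + L*I2)) \<le> L * (e*(e*(I3/d + I2)))"
  proof -
    have "I3 \<le> q * I3" using q1 nn by (simp add: mult_le_cancel_right1)
    then have "I3 + L*I2 \<le> L * (I3/d + I2)" using d by (simp add: L algebra_simps)
    then have "e*(e*(I3 + L*I2)) \<le> e*(e*(L * (I3/d + I2)))"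
      using nn by (intro mult_left_mono) (auto simp: zero_le_mult_iff)
    then show ?thesis by (simp add: ac_simps)
  qed
  then have X: "(L*e + e*(e*(I3 + L*I2)))^2 \<le> L^2 * (e + e*(e*(I3/d + I2)))^2"
    using nn Lp unfolding power_mult_distrib[symmetric] by (intro power_mono) (auto simp: algebra_simps)
  have I: "I22 \<le> L^2 * (I22/d^2)" using qq nn d by (simp add: L power_mult_distrib mult_le_cancel_right1)
  have O: "1 \<le> L^2 * (1/d^2)" using qq d by (simp add: L power_mult_distrib)
  have "2*K^2*((L*e + e*(e*(I3 + L*I2)))^2 + I22) \<le> 2*K^2*(L^2 * (e + e*(e*(I3/d + I2)))^2 + L^2 * (I22/d^2))"
    by (intro mult_left_mono add_mono X I) auto
  then have "1 + 2*K^2*((L*e + e*(e*(I3 + L*I2)))^2 + I22)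
      \<le> L^2 * (1/d^2 + 2*K^2*((e + e*(e*(I3/d + I2)))^2 + I22/d^2))"
    using O by (simp add: algebra_simps)
  then have "sqrt (1 + 2*K^2*((L*e + e*(e*(I3 + L*I2)))^2 + I22))
      \<le> L * sqrt (1/d^2 + 2*K^2*((e + e*(e*(I3/d + I2)))^2 + I22/d^2))"
    using Lp by (metis abs_of_pos real_sqrt_abs real_sqrt_le_mono real_sqrt_mult)
  then show ?thesis using Lp by (simp add: divide_le_eq mult.commute)
qed

theorem lemma4:
  fixes A1 :: "complex^'n^'n"
    and A2 A3 :: "real \<Rightarrow> complex^'n^'n"
    and lam :: "complex \<Rightarrow> int \<Rightarrow> complex"
    and r :: "int \<Rightarrow> real"
    and N1 N :: nat
    and x y :: "complex \<Rightarrow> int \<Rightarrow> complex^'n"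
  assumes A2_L2: "L2_on A2" and A3_L2: "L2_on A3"
    and simple: "\<forall>\<mu>\<in>sigma1 A1. alg_mult A1 \<mu> = 1"
    and r_sq: "summable (\<lambda>j::nat. (r (int j))\<^sup>2 + (r (- int j))\<^sup>2)"
    and root: "\<forall>\<mu>\<in>sigma1 A1. \<forall>k. \<bar>k\<bar> \<ge> int N1 \<longrightarrow>
                 det (Delta A1 A2 A3 (lam \<mu> k)) = 0 \<and> cmod (lam \<mu> k - lam_tilde \<mu> k) < r k"
    and root_unique: "\<forall>\<mu>\<in>sigma1 A1. \<forall>k z. \<bar>k\<bar> \<ge> int N1 \<longrightarrow>
                 det (Delta A1 A2 A3 z) = 0 \<longrightarrow> cmod (z - lam_tilde \<mu> k) < r k \<longrightarrow> z = lam \<mu> k"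
    and root_conv: "\<forall>\<mu>\<in>sigma1 A1.
                 ((\<lambda>j::nat. lam \<mu> (int j) - lam_tilde \<mu> (int j)) \<longlonglongrightarrow> 0) \<and>
                 ((\<lambda>j::nat. lam \<mu> (- int j) - lam_tilde \<mu> (- int j)) \<longlonglongrightarrow> 0)"
    and NN1: "N \<ge> N1"
    and nonzero: "\<forall>\<mu>\<in>sigma1 A1. \<forall>k. \<bar>k\<bar> \<ge> int N \<longrightarrow> lam \<mu> k \<noteq> 0"
    and x_ker: "\<forall>\<mu>\<in>sigma1 A1. \<forall>k. \<bar>k\<bar> \<ge> int N \<longrightarrow>
                 Delta A1 A2 A3 (lam \<mu> k) *v x \<mu> k = 0 \<and> norm (x \<mu> k) = 1"
    and y_ker: "\<forall>\<mu>\<in>sigma1 A1. \<forall>k. \<bar>k\<bar> \<ge> int N \<longrightarrow>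
                 Delta_star A1 A2 A3 (cnj (lam \<mu> k)) *v y \<mu> k = 0 \<and> norm (y \<mu> k) = 1"
  shows "\<exists>C>0. \<forall>\<mu>\<in>sigma1 A1. \<forall>k. \<bar>k\<bar> \<ge> int N \<longrightarrow>
           L2_on (phi1 (lam \<mu> k) (x \<mu> k)) \<and>
           L2_on (psi1 A2 A3 (lam \<mu> k) (y \<mu> k)) \<and>
           M2_norm (phi0 A1 (lam \<mu> k) (x \<mu> k)) (phi1 (lam \<mu> k) (x \<mu> k)) \<le> C \<and>
           M2_norm (y \<mu> k) (psi1 A2 A3 (lam \<mu> k) (y \<mu> k)) / cmod (lam \<mu> k) \<le> C"
proof -
  have "(\<lambda>j::nat. (r (int j))\<^sup>2 + (r (- int j))\<^sup>2) \<longlonglongrightarrow> 0"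
    by (rule summable_LIMSEQ_zero[OF r_sq])
  then have "Bseq (\<lambda>j::nat. (r (int j))\<^sup>2 + (r (- int j))\<^sup>2)"
    by (intro convergent_imp_Bseq convergentI)
  then obtain B where B0: "B > 0" and B1: "\<forall>j. norm ((r (int j))\<^sup>2 + (r (- int j))\<^sup>2) \<le> B"
    by (rule BseqE)
  have B: "\<And>j. (r (int j))\<^sup>2 + (r (- int j))\<^sup>2 \<le> B" "B > 0" using B0 B1 by auto
  define R where "R = sqrt B"
  have R0: "R \<ge> 0" using B by (simp add: R_def)
  have rR: "r k \<le> R" for k
  proof -
    have "(r k)^2 \<le> B"
    proof (cases "k \<ge> 0")
      case True
      then obtain j where "k = int j" using nonneg_int_cases by metis
      then have "(r k)^2 = (r (int j))^2" by simp
      then show ?thesis using B(1)[of j] zero_le_power2[of "r (- int j)"] by linarith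
    next
      case False
      then obtain j where "k = - int j" by (metis neg_int_cases less_le not_le)
      then have "(r k)^2 = (r (- int j))^2" by simp
      then show ?thesis using B(1)[of j] zero_le_power2[of "r (int j)"] by linarith
    qed
    then have "\<bar>r k\<bar> \<le> R" unfolding R_def using real_sqrt_le_mono real_sqrt_abs by metis
    then show ?thesis by simp
  qed
  have ReR: "\<bar>Re (lam \<mu> k)\<bar> \<le> R" if "\<mu> \<in> sigma1 A1" "\<bar>k\<bar> \<ge> int N" for \<mu> k
  proof -
    have "\<bar>k\<bar> \<ge> int N1" using that NN1 by linarith
    then have c: "cmod (lam \<mu> k - lam_tilde \<mu> k) < r k" using root that by blast
    have "Re (lam_tilde \<mu> k) = 0" by (simp add: lam_tilde_def)
    then have "\<bar>Re (lam \<mu> k)\<bar> \<le> cmod (lam \<mu> k - lam_tilde \<mu> k)"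
      using abs_Re_le_cmod[of "lam \<mu> k - lam_tilde \<mu> k"] by simp
    then show ?thesis using c rR[of k] by linarith
  qed
  define K0 :: int where "K0 = int (nat (ceiling R)) + 1"
  have K0R: "real_of_int K0 \<ge> R + 1" unfolding K0_def by linarith
  have big: "cmod (lam \<mu> k) \<ge> 1" if "\<mu> \<in> sigma1 A1" "\<bar>k\<bar> \<ge> K0" "\<bar>k\<bar> \<ge> int N" for \<mu> k
  proof -
    have "\<bar>k\<bar> \<ge> int N1" using that NN1 by linarith
    then have c: "cmod (lam \<mu> k - lam_tilde \<mu> k) < r k" using root that by blast
    define t where "t = Arg \<mu> + 2 * pi * of_int k"
    have Imt: "Im (lam_tilde \<mu> k) = t" by (simp add: lam_tilde_def t_def)
    have ab: "- pi < Arg \<mu>" "Arg \<mu> \<le> pi" using Arg_bounded by auto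
    have kk: "real_of_int \<bar>k\<bar> \<ge> R + 1" using K0R that(2) by linarith
    have p3: "pi * real_of_int \<bar>k\<bar> \<ge> 3 * real_of_int \<bar>k\<bar>"
      using pi_gt3 by (intro mult_right_mono) auto
    have "\<bar>t\<bar> \<ge> 2 * (pi * real_of_int \<bar>k\<bar>) - pi"
    proof (cases "k \<ge> 0")
      case True then show ?thesis using ab by (simp add: t_def)
    next
      case False then show ?thesis using ab by (simp add: t_def)
    qed
    moreover have "\<bar>Im (lam \<mu> k - lam_tilde \<mu> k)\<bar> \<le> cmod (lam \<mu> k - lam_tilde \<mu> k)"
      by (rule abs_Im_le_cmod)
    moreover have "\<bar>Im (lam \<mu> k)\<bar> \<le> cmod (lam \<mu> k)" by (rule abs_Im_le_cmod)
    ultimately show ?thesis using c rR[of k] Imt kk p3 pi_less_4 R0 by auto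
  qed
  have finS: "finite (sigma1 A1)" by (rule finite_sigma1[OF simple])
  define F where "F = (\<lambda>(\<mu>, k). cmod (lam \<mu> k)) ` (sigma1 A1 \<times> {k. int N \<le> \<bar>k\<bar> \<and> \<bar>k\<bar> \<le> K0})"
  have finF: "finite F" unfolding F_def
  proof (intro finite_imageI finite_cartesian_product finS)
    show "finite {k. int N \<le> \<bar>k\<bar> \<and> \<bar>k\<bar> \<le> K0}"
      by (rule finite_subset[of _ "{-K0..K0}"]) auto
  qed
  define \<delta> where "\<delta> = Min (insert 1 F)"
  have Fpos: "\<forall>z\<in>F. z > 0" unfolding F_def using nonzero by auto
  have d0: "\<delta> > 0" unfolding \<delta>_def using finF Fpos by (subst Min_gr_iff) auto
  have dle: "\<delta> \<le> cmod (lam \<mu> k)" if "\<mu> \<in> sigma1 A1" "\<bar>k\<bar> \<ge> int N" for \<mu> k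
  proof (cases "\<bar>k\<bar> \<le> K0")
    case True
    then have "cmod (lam \<mu> k) \<in> F" unfolding F_def using that by force
    then show ?thesis unfolding \<delta>_def using finF by (intro Min_le) auto
  next
    case False
    then have "cmod (lam \<mu> k) \<ge> 1" using big that by auto
    moreover have "\<delta> \<le> 1" unfolding \<delta>_def using finF by (intro Min_le) auto
    ultimately show ?thesis by linarith
  qed
  define K :: real where "K = real CARD('n) * real CARD('n)"
  define I2 where "I2 = (LINT s|lborel. norm (indicator {-1..0::real} s *\<^sub>R A2 s))"
  define I3 where "I3 = (LINT s|lborel. norm (indicator {-1..0::real} s *\<^sub>R A3 s))"
  define I22 where "I22 = (LINT s:{-1..0::real}|lborel. norm (A2 s)^2)"
  have I2: "I2 \<ge> 0" unfolding I2_def by simp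
  have I3: "I3 \<ge> 0" unfolding I3_def by simp
  have I22: "I22 \<ge> 0" unfolding I22_def set_lebesgue_integral_def by simp
  define C1 where "C1 = sqrt ((K * (1 + exp R * norm A1))^2 + (exp R)^2)"
  define C2 where "C2 = sqrt (1/\<delta>^2 + 2*K^2*((exp R + exp R*(exp R*(I3/\<delta> + I2)))^2 + I22/\<delta>^2))"
  have C1: "C1 > 0" unfolding C1_def by (intro real_sqrt_gt_zero add_nonneg_pos) auto
  show ?thesis
  proof (intro exI[of _ "max C1 C2"] conjI ballI allI impI)
    show "max C1 C2 > 0" using C1 by simp
    fix \<mu> k assume \<mu>: "\<mu> \<in> sigma1 A1" and k: "\<bar>k\<bar> \<ge> int N"
    have Rl: "\<bar>Re (lam \<mu> k)\<bar> \<le> R" by (rule ReR[OF \<mu> k])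
    have xn: "norm (x \<mu> k) = 1" and yn: "norm (y \<mu> k) = 1" using x_ker y_ker \<mu> k by auto
    note P = phi_bound[OF Rl xn, of A1]
    note Q = psi_bound[OF A2_L2 A3_L2 Rl yn]
    show "L2_on (phi1 (lam \<mu> k) (x \<mu> k))" using P by blast
    show "L2_on (psi1 A2 A3 (lam \<mu> k) (y \<mu> k))" using Q by blast
    show "M2_norm (phi0 A1 (lam \<mu> k) (x \<mu> k)) (phi1 (lam \<mu> k) (x \<mu> k)) \<le> max C1 C2"
      using P unfolding C1_def K_def by linarith
    have "M2_norm (y \<mu> k) (psi1 A2 A3 (lam \<mu> k) (y \<mu> k)) / cmod (lam \<mu> k)
       \<le> sqrt (1 + 2*K^2*((cmod (lam \<mu> k)*exp R + exp R*(exp R*(I3 + cmod (lam \<mu> k)*I2)))^2 + I22)) / cmod (lam \<mu> k)"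
      using Q unfolding K_def I2_def I3_def I22_def
      by (intro divide_right_mono) (auto simp: mult.commute)
    also have "\<dots> \<le> C2" unfolding C2_def
      by (rule div_bound[OF d0 dle[OF \<mu> k]]) (use I2 I3 I22 in auto)
    finally show "M2_norm (y \<mu> k) (psi1 A2 A3 (lam \<mu> k) (y \<mu> k)) / cmod (lam \<mu> k) \<le> max C1 C2"
      by linarith
  qed
qed

end
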